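(* Let $\mathcal{P}=\langle P,\le\rangle$ be a finite bounded poset with $|P|\ge 2$. Then there exists $m\in\mathbb{N}$ such that $(R^+_{All})^m(\mathcal{P})$ is graded.
   Context: A poset is bounded if it has a least element $\bot$ and greatest element $\top$. The height $H$ of a finite poset is the number of elements in its largest chain. $a\lessdot b$ denotes covering. A bounded poset with top $\top$ and height $H$ is graded if there is $\rho:P\to\{0,\dots,H-1\}$ with $\rho(\top)=0$ and $\rho(a)=\rho(b)-1$ whenever $a\lessdot b$. For $a\in P$, $\uparrow a=\{b:b\ge a\}$, $\downarrow a=\{b:b\le a\}$ as subposets; the standard interval rank is $R^+(a)=[H(\uparrow a)-1,\;H(\mathcal{P})-H(\downarrow a)]$. Weak order: $[x_*,x^*]\le_W[y_*,y^*]$ iff $x_*\le y_*$ and $x^*\le y^*$. Define $R^+_{All}(\mathcal{P})=\langle P,\le_{R_A}\rangle$ on the same underlying set, where $p<_{R_A}q$ iff $R^+(p)>_W R^+(q)$ (strictly), and $\le_{R_A}$ is the reflexive closure of $<_{R_A}$ (so distinct elements with equal standard interval rank are incomparable). $(R^+_{All})^m$ denotes $m$-fold iteration, each time computing $R^+$ in the current poset. *)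

theory Defs
  imports Main
begin

definition poset :: "'a set \<Rightarrow> ('a \<Rightarrow> 'a \<Rightarrow> bool) \<Rightarrow> bool" where
  "poset P le \<longleftrightarrow> (\<forall>x\<in>P. le x x)
     \<and> (\<forall>x\<in>P. \<forall>y\<in>P. le x y \<and> le y x \<longrightarrow> x = y)
     \<and> (\<forall>x\<in>P. \<forall>y\<in>P. \<forall>z\<in>P. le x y \<and> le y z \<longrightarrow> le x z)"

definition is_bot :: "'a set \<Rightarrow> ('a \<Rightarrow> 'a \<Rightarrow> bool) \<Rightarrow> 'a \<Rightarrow> bool" where
  "is_bot P le b \<longleftrightarrow> b \<in> P \<and> (\<forall>x\<in>P. le b x)"

definition is_top :: "'a set \<Rightarrow> ('a \<Rightarrow> 'a \<Rightarrow> bool) \<Rightarrow> 'a \<Rightarrow> bool" where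
  "is_top P le t \<longleftrightarrow> t \<in> P \<and> (\<forall>x\<in>P. le x t)"

definition bounded_poset :: "'a set \<Rightarrow> ('a \<Rightarrow> 'a \<Rightarrow> bool) \<Rightarrow> bool" where
  "bounded_poset P le \<longleftrightarrow> poset P le \<and> (\<exists>b. is_bot P le b) \<and> (\<exists>t. is_top P le t)"

definition is_chain :: "('a \<Rightarrow> 'a \<Rightarrow> bool) \<Rightarrow> 'a set \<Rightarrow> bool" where
  "is_chain le C \<longleftrightarrow> (\<forall>x\<in>C. \<forall>y\<in>C. le x y \<or> le y x)"

definition height :: "'a set \<Rightarrow> ('a \<Rightarrow> 'a \<Rightarrow> bool) \<Rightarrow> nat" where
  "height S le = Max {card C | C. C \<subseteq> S \<and> is_chain le C}"

definition covers :: "'a set \<Rightarrow> ('a \<Rightarrow> 'a \<Rightarrow> bool) \<Rightarrow> 'a \<Rightarrow> 'a \<Rightarrow> bool" where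
  "covers P le a b \<longleftrightarrow> a \<in> P \<and> b \<in> P \<and> le a b \<and> a \<noteq> b
     \<and> \<not> (\<exists>c\<in>P. le a c \<and> le c b \<and> c \<noteq> a \<and> c \<noteq> b)"

definition graded :: "'a set \<Rightarrow> ('a \<Rightarrow> 'a \<Rightarrow> bool) \<Rightarrow> bool" where
  "graded P le \<longleftrightarrow> bounded_poset P le \<and>
     (\<exists>\<rho> :: 'a \<Rightarrow> nat. (\<forall>x\<in>P. \<rho> x < height P le)
        \<and> (\<forall>t. is_top P le t \<longrightarrow> \<rho> t = 0)
        \<and> (\<forall>a b. covers P le a b \<longrightarrow> \<rho> a = \<rho> b + 1))"

definition interval_rank :: "'a set \<Rightarrow> ('a \<Rightarrow> 'a \<Rightarrow> bool) \<Rightarrow> 'a \<Rightarrow> nat \<times> nat" where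
  "interval_rank P le a =
     (height {b \<in> P. le a b} le - 1, height P le - height {b \<in> P. le b a} le)"

definition weak_le :: "nat \<times> nat \<Rightarrow> nat \<times> nat \<Rightarrow> bool" where
  "weak_le x y \<longleftrightarrow> fst x \<le> fst y \<and> snd x \<le> snd y"

definition R_All :: "'a set \<Rightarrow> ('a \<Rightarrow> 'a \<Rightarrow> bool) \<Rightarrow> ('a \<Rightarrow> 'a \<Rightarrow> bool)" where
  "R_All P le = (\<lambda>p q. p = q \<or>
     (p \<in> P \<and> q \<in> P \<and> weak_le (interval_rank P le q) (interval_rank P le p)
        \<and> interval_rank P le q \<noteq> interval_rank P le p))"

end

theory Submission imports Defs begin

lemma chain_set_finite:
  assumes "finite S"
  shows "finite {card C | C. C \<subseteq> S \<and> is_chain le C}"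
proof -
  have "{card C | C. C \<subseteq> S \<and> is_chain le C} \<subseteq> card ` Pow S" by auto
  thus ?thesis using assms by (meson finite_Pow_iff finite_imageI finite_subset)
qed

lemma height_ge:
  assumes "finite S" "C \<subseteq> S" "is_chain le C"
  shows "card C \<le> height S le"
  unfolding height_def using assms chain_set_finite[OF assms(1)]
  by (intro Max_ge) auto

lemma height_obtain:
  assumes "finite S"
  shows "\<exists>C. C \<subseteq> S \<and> is_chain le C \<and> card C = height S le"
proof -
  have "card {} \<in> {card C | C. C \<subseteq> S \<and> is_chain le C}"
    by (rule CollectI, rule exI[where x="{}"]) (auto simp: is_chain_def)
  hence ne: "{card C | C. C \<subseteq> S \<and> is_chain le C} \<noteq> {}" by blast
  have "height S le \<in> {card C | C. C \<subseteq> S \<and> is_chain le C}"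
    unfolding height_def using chain_set_finite[OF assms] ne by (rule Max_in)
  thus ?thesis by auto
qed

lemma height_mono:
  assumes "finite T" "S \<subseteq> T"
  shows "height S le \<le> height T le"
proof -
  obtain C where "C \<subseteq> S" "is_chain le C" "card C = height S le"
    using height_obtain[of S le] assms finite_subset by blast
  thus ?thesis using height_ge[of T C le] assms by auto
qed

lemma height_le_card:
  assumes "finite S"
  shows "height S le \<le> card S"
  using height_obtain[OF assms, of le] assms by (metis card_mono)

lemma height_pos:
  assumes "finite S" "x \<in> S" "le x x"
  shows "1 \<le> height S le"
  using height_ge[of S "{x}" le] assms by (auto simp: is_chain_def)

lemma chain_min:
  assumes "finite C" "C \<noteq> {}" "C \<subseteq> P" "is_chain le C" "poset P le"
  shows "\<exists>y\<in>C. \<forall>z\<in>C. le y z"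
  using assms
proof (induction C rule: finite_ne_induct)
  case (singleton x)
  thus ?case by (auto simp: poset_def)
next
  case (insert a F)
  then obtain y where y: "y \<in> F" "\<forall>z\<in>F. le y z" by (auto simp: is_chain_def)
  show ?case
  proof (cases "le a y")
    case True
    have "\<forall>z\<in>F. le a z" using True y insert.prems unfolding poset_def by blast
    moreover have "le a a" using insert.prems unfolding poset_def by blast
    ultimately show ?thesis by blast
  next
    case False
    hence "le y a" using insert.prems y unfolding is_chain_def by blast
    thus ?thesis using y by blast
  qed
qed

lemma up_step:
  assumes "poset P le" "finite P" "x \<in> P" "y \<in> P" "le x y" "x \<noteq> y"
  shows "height {b\<in>P. le y b} le + 1 \<le> height {b\<in>P. le x b} le"
proof -
  obtain C where C: "C \<subseteq> {b\<in>P. le y b}" "is_chain le C" "card C = height {b\<in>P. le y b} le"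
    using height_obtain[of "{b\<in>P. le y b}" le] assms by auto
  have xC: "x \<notin> C" using C assms unfolding poset_def by blast
  have lxc: "\<forall>c\<in>C. le x c" using C assms unfolding poset_def by blast
  have "insert x C \<subseteq> {b\<in>P. le x b}" using C lxc assms unfolding poset_def by blast
  moreover have "is_chain le (insert x C)" using C lxc assms unfolding is_chain_def poset_def by blast
  moreover have "finite C" using C assms finite_subset by (metis (no_types, lifting) mem_Collect_eq subsetI rev_finite_subset)
  ultimately show ?thesis using height_ge[of "{b\<in>P. le x b}" "insert x C" le] C xC assms by auto
qed

lemma down_step:
  assumes "poset P le" "finite P" "x \<in> P" "y \<in> P" "le x y" "x \<noteq> y"
  shows "height {b\<in>P. le b x} le + 1 \<le> height {b\<in>P. le b y} le"
proof -
  obtain C where C: "C \<subseteq> {b\<in>P. le b x}" "is_chain le C" "card C = height {b\<in>P. le b x} le"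
    using height_obtain[of "{b\<in>P. le b x}" le] assms by auto
  have xC: "y \<notin> C" using C assms unfolding poset_def by blast
  have lxc: "\<forall>c\<in>C. le c y" using C assms unfolding poset_def by blast
  have "insert y C \<subseteq> {b\<in>P. le b y}" using C lxc assms unfolding poset_def by blast
  moreover have "is_chain le (insert y C)" using C lxc assms unfolding is_chain_def poset_def by blast
  moreover have "finite C" using C assms finite_subset by (metis (no_types, lifting) mem_Collect_eq subsetI rev_finite_subset)
  ultimately show ?thesis using height_ge[of "{b\<in>P. le b y}" "insert y C" le] C xC assms by auto
qed

lemma strict_rank:
  assumes "poset P le" "finite P" "x \<in> P" "y \<in> P" "le x y" "x \<noteq> y"
  shows "fst (interval_rank P le y) < fst (interval_rank P le x) \<and>
         snd (interval_rank P le y) < snd (interval_rank P le x)"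
proof -
  have "le y y" using assms unfolding poset_def by blast
  hence p: "1 \<le> height {b\<in>P. le y b} le" using height_pos[of "{b\<in>P. le y b}" y le] assms by auto
  have m: "height {b\<in>P. le b y} le \<le> height P le" using height_mono[of P] assms by auto
  show ?thesis using up_step[OF assms] down_step[OF assms] p m
    unfolding interval_rank_def by auto
qed


lemma step_props:
  assumes "bounded_poset P le" "finite P"
  shows "bounded_poset P (R_All P le) \<and> (\<forall>x\<in>P. \<forall>y\<in>P. le x y \<longrightarrow> R_All P le x y)"
proof -
  let ?r = "interval_rank P le"
  have po: "poset P le" using assms unfolding bounded_poset_def by blast
  have mono: "\<forall>x\<in>P. \<forall>y\<in>P. le x y \<longrightarrow> R_All P le x y"
  proof (intro ballI impI)
    fix x y assume "x \<in> P" "y \<in> P" "le x y"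
    show "R_All P le x y"
    proof (cases "x = y")
      case True thus ?thesis unfolding R_All_def by simp
    next
      case False
      from strict_rank[OF po assms(2) \<open>x\<in>P\<close> \<open>y\<in>P\<close> \<open>le x y\<close> False]
      show ?thesis using \<open>x\<in>P\<close> \<open>y\<in>P\<close> unfolding R_All_def weak_le_def
        by (auto simp: prod_eq_iff)
    qed
  qed
  have "poset P (R_All P le)"
    unfolding poset_def R_All_def weak_le_def by (auto simp: prod_eq_iff)
  moreover have "\<exists>b. is_bot P (R_All P le) b"
  proof -
    obtain b where "is_bot P le b" using assms unfolding bounded_poset_def by blast
    hence "is_bot P (R_All P le) b" using mono unfolding is_bot_def by blast
    thus ?thesis by blast
  qed
  moreover have "\<exists>b. is_top P (R_All P le) b"
  proof -
    obtain b where "is_top P le b" using assms unfolding bounded_poset_def by blast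
    hence "is_top P (R_All P le) b" using mono unfolding is_top_def by blast
    thus ?thesis by blast
  qed
  ultimately show ?thesis using mono unfolding bounded_poset_def by blast
qed

lemma iter_props:
  assumes "bounded_poset P le" "finite P"
  shows "bounded_poset P ((R_All P ^^ m) le)"
  by (induction m) (use assms step_props in auto)

lemma stabilize:
  fixes S :: "nat \<Rightarrow> 'b set"
  assumes "\<And>m. S m \<subseteq> S (Suc m)" "\<And>m. S m \<subseteq> A" "finite A"
  shows "\<exists>m. S (Suc m) = S m"
proof (rule ccontr)
  assume "\<not> ?thesis"
  hence ps: "\<And>m. S m \<subset> S (Suc m)" using assms(1) by blast
  have "\<And>m. m \<le> card (S m)"
  proof -
    fix m show "m \<le> card (S m)"
    proof (induction m)
      case 0 thus ?case by simp
    next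
      case (Suc m)
      have "card (S m) < card (S (Suc m))"
        using ps[of m] assms(2)[of "Suc m"] assms(3) by (meson psubset_card_mono rev_finite_subset)
      thus ?case using Suc by simp
    qed
  qed
  moreover have "card (S (Suc (card A))) \<le> card A" using assms(2,3) by (meson card_mono)
  ultimately show False by (metis Suc_n_not_le_n le_trans)
qed


lemma up_exists:
  assumes "poset P le" "finite P" "x \<in> P" "2 \<le> height {b\<in>P. le x b} le"
  shows "\<exists>y\<in>P. le x y \<and> y \<noteq> x \<and> height {b\<in>P. le y b} le = height {b\<in>P. le x b} le - 1"
proof -
  let ?U = "\<lambda>x. height {b\<in>P. le x b} le"
  obtain C where C: "C \<subseteq> {b\<in>P. le x b}" "is_chain le C" "card C = ?U x"
    using height_obtain[of "{b\<in>P. le x b}" le] assms by auto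
  have lx: "le x x" using assms unfolding poset_def by blast
  have "finite {b\<in>P. le x b}" using assms(2) by simp
  hence fC: "finite C" using C(1) finite_subset by blast
  let ?C = "C - {x}"
  have cC: "card ?C \<ge> ?U x - 1" using C fC by (simp add: card_Diff_singleton_if)
  have "card ?C \<ge> 1" using cC assms(4) by linarith
  hence ne: "?C \<noteq> {}" by (metis card.empty not_one_le_zero)
  have sub: "?C \<subseteq> P" using C by auto
  have ch: "is_chain le ?C" using C unfolding is_chain_def by blast
  obtain y where y: "y \<in> ?C" "\<forall>z\<in>?C. le y z"
    using chain_min[of ?C P le] fC ne sub ch assms(1) by blast
  have yP: "y \<in> P" "le x y" "y \<noteq> x" using y C by auto
  have "?C \<subseteq> {b\<in>P. le y b}" using y sub by auto
  hence "card ?C \<le> ?U y" using height_ge[of "{b\<in>P. le y b}" ?C le] ch assms(2) by auto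
  moreover have "?U y + 1 \<le> ?U x" using up_step[OF assms(1,2,3) yP(1,2)] yP(3) by auto
  ultimately have "height {b\<in>P. le y b} le = height {b\<in>P. le x b} le - 1" using cC by linarith
  thus ?thesis using yP by blast
qed

lemma up_exists_j:
  assumes "poset P le" "finite P"
  shows "\<And>x. x \<in> P \<Longrightarrow> height {b\<in>P. le x b} le = j + k \<Longrightarrow> 1 \<le> j \<Longrightarrow>
     \<exists>y\<in>P. le x y \<and> height {b\<in>P. le y b} le = j"
proof (induction k)
  case 0
  have "le x x" using assms 0 unfolding poset_def by blast
  thus ?case using 0 by auto
next
  case (Suc k)
  obtain y where y: "y \<in> P" "le x y" "height {b\<in>P. le y b} le = j + k"
    using up_exists[OF assms Suc.prems(1)] Suc.prems by auto
  obtain z where z: "z \<in> P" "le y z" "height {b\<in>P. le z b} le = j"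
    using Suc.IH[OF y(1) y(3) Suc.prems(3)] by blast
  have "le x z" using y z Suc.prems assms unfolding poset_def by blast
  thus ?case using z by blast
qed

lemma fixed_graded:
  assumes bp: "bounded_poset P le" and fin: "finite P"
    and fp: "\<forall>x\<in>P. \<forall>y\<in>P. R_All P le x y = le x y"
  shows "graded P le"
proof -
  have po: "poset P le" using bp unfolding bounded_poset_def by blast
  let ?r = "interval_rank P le"
  let ?U = "\<lambda>x. height {b\<in>P. le x b} le"
  have U1: "\<And>x. x \<in> P \<Longrightarrow> 1 \<le> ?U x"
  proof -
    fix x assume x: "x \<in> P"
    have lx: "le x x" using po x unfolding poset_def by blast
    have "finite {b\<in>P. le x b}" using fin by simp
    thus "1 \<le> ?U x" using height_pos[of "{b\<in>P. le x b}" x le] lx x by simp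
  qed
  have fstr: "\<And>x. fst (?r x) = ?U x - 1" unfolding interval_rank_def by simp
  have fx: "\<And>x y. x \<in> P \<Longrightarrow> y \<in> P \<Longrightarrow> x \<noteq> y \<Longrightarrow>
      le x y = (weak_le (?r y) (?r x) \<and> ?r y \<noteq> ?r x)"
  proof -
    fix x y assume xy: "x \<in> P" "y \<in> P" "x \<noteq> y"
    have "R_All P le x y = le x y" using fp xy by blast
    thus "le x y = (weak_le (?r y) (?r x) \<and> ?r y \<noteq> ?r x)" using xy unfolding R_All_def by simp
  qed
  have st: "\<And>x y. x \<in> P \<Longrightarrow> y \<in> P \<Longrightarrow> le x y \<Longrightarrow> x \<noteq> y \<Longrightarrow>
      fst (?r y) < fst (?r x) \<and> snd (?r y) < snd (?r x)"
    using strict_rank[OF po fin] by blast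
  have eqr: "?r x = ?r y" if "x \<in> P" "y \<in> P" "?U x = ?U y" for x y
  proof (rule ccontr)
    assume ne: "?r x \<noteq> ?r y"
    have f: "fst (?r x) = fst (?r y)" using that fstr by simp
    hence sn: "snd (?r x) \<noteq> snd (?r y)" using ne by (simp add: prod_eq_iff)
    show False
    proof (cases "snd (?r x) < snd (?r y)")
      case True
      hence "le y x" using fx[of y x] that ne f unfolding weak_le_def by auto
      thus False using st[of y x] that ne f by auto
    next
      case False
      hence "snd (?r y) < snd (?r x)" using sn by simp
      hence "le x y" using fx[of x y] that ne f unfolding weak_le_def by auto
      thus False using st[of x y] that ne f by auto
    qed
  qed
  have cov: "?U a = ?U b + 1" if c: "covers P le a b" for a b
  proof (rule ccontr)
    assume ne: "?U a \<noteq> ?U b + 1"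
    have ab: "a \<in> P" "b \<in> P" "le a b" "a \<noteq> b" using c unfolding covers_def by auto
    have "?U b < ?U a" using up_step[OF po fin ab] by simp
    hence big: "?U a \<ge> ?U b + 2" using ne by auto
    have e1: "?U a = (?U b + 1) + (?U a - (?U b + 1))" using big by simp
    have o1: "1 \<le> ?U b + 1" by simp
    obtain c where cc: "c \<in> P" "le a c" "?U c = ?U b + 1"
      using up_exists_j[OF po fin ab(1) e1 o1] by blast
    obtain c' where cc': "c' \<in> P" "le c c'" "?U c' = ?U b"
      using up_exists_j[OF po fin cc(1) cc(3) U1[OF ab(2)]] by blast
    have "c \<noteq> c'" using cc cc' by auto
    from st[OF cc(1) cc'(1) cc'(2) this]
    have s: "fst (?r c') < fst (?r c)" "snd (?r c') < snd (?r c)" by auto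
    have "?r c' = ?r b" using eqr[OF cc'(1) ab(2) cc'(3)] .
    hence "weak_le (?r b) (?r c) \<and> ?r b \<noteq> ?r c" using s unfolding weak_le_def by auto
    moreover have "c \<noteq> b" using cc by auto
    ultimately have "le c b" using fx[OF cc(1) ab(2)] by blast
    moreover have "c \<noteq> a" using cc big by auto
    ultimately have "c \<in> P \<and> le a c \<and> le c b \<and> c \<noteq> a \<and> c \<noteq> b" using cc \<open>c \<noteq> b\<close> by blast
    thus False using c unfolding covers_def by blast
  qed
  have "\<forall>x\<in>P. ?U x - 1 < height P le"
  proof
    fix x assume "x \<in> P"
    have "?U x \<le> height P le" using height_mono[of P "{b\<in>P. le x b}" le] fin by auto
    thus "?U x - 1 < height P le" using U1[OF \<open>x\<in>P\<close>] by linarith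
  qed
  moreover have "\<forall>t. is_top P le t \<longrightarrow> ?U t - 1 = 0"
  proof (intro allI impI)
    fix t assume t: "is_top P le t"
    have "{b\<in>P. le t b} \<subseteq> {t}" using t po unfolding is_top_def poset_def by blast
    hence "?U t \<le> card {t}" using height_mono[of "{t}" "{b\<in>P. le t b}" le] height_le_card[of "{t}" le]
      by auto
    thus "?U t - 1 = 0" by simp
  qed
  moreover have "\<forall>a b. covers P le a b \<longrightarrow> ?U a - 1 = (?U b - 1) + 1"
  proof (intro allI impI)
    fix a b assume "covers P le a b"
    thus "?U a - 1 = (?U b - 1) + 1" using cov[of a b] U1[of b] unfolding covers_def by simp
  qed
  ultimately show ?thesis using bp unfolding graded_def by (intro conjI exI[of _ "\<lambda>x. ?U x - 1"]) auto
qed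

theorem lemma1:
  fixes P :: "'a set" and le :: "'a \<Rightarrow> 'a \<Rightarrow> bool"
  assumes "finite P" and "bounded_poset P le" and "card P \<ge> 2"
  shows "\<exists>m::nat. graded P ((R_All P ^^ m) le)"
proof -
  let ?S = "\<lambda>m. {(x,y). x \<in> P \<and> y \<in> P \<and> (R_All P ^^ m) le x y}"
  have "\<And>m. ?S m \<subseteq> ?S (Suc m)"
    using step_props[OF iter_props[OF assms(2,1)] assms(1)] by auto
  moreover have "\<And>m. ?S m \<subseteq> P \<times> P" by auto
  ultimately obtain m where m: "?S (Suc m) = ?S m"
    using stabilize[of ?S "P \<times> P"] assms(1) by blast
  have "\<forall>x\<in>P. \<forall>y\<in>P. R_All P ((R_All P ^^ m) le) x y = (R_All P ^^ m) le x y"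
  proof (intro ballI)
    fix x y assume "x \<in> P" "y \<in> P"
    have "(x,y) \<in> ?S (Suc m) \<longleftrightarrow> (x,y) \<in> ?S m" using m by simp
    thus "R_All P ((R_All P ^^ m) le) x y = (R_All P ^^ m) le x y"
      using \<open>x \<in> P\<close> \<open>y \<in> P\<close> by simp
  qed
  hence "graded P ((R_All P ^^ m) le)"
    using fixed_graded iter_props[OF assms(2,1)] assms(1) by blast
  thus ?thesis by blast
qed

end
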